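(* Let $G$ be an $m$-player $n_0$-action normal-form game with payoff tensors $M_1,\dots,M_m$, let $\epsilon>0$, and let $\mathcal{G}=\mathcal{G}(G)$ be the $(m+1)$-player Markov game described in the context. For any $i\in[m]$, any state $s$, any $h\in[H]$, and any product distribution $q$ over $\bar{\mathcal{A}}_{-i}:=\prod_{j\in[m+1]\setminus\{i\}}\mathcal{A}_j$, it holds that $\max_{a_i'\in\mathcal{A}_i}\mathbb{E}_{\mathbf{a}\sim q}[R_{i,h}(s,(a_i',\mathbf{a}))]\ge0$.
   Context: The Markov game $\mathcal{G}(G)$: horizon $H$ is the power of $2$ with $n_0\le H<2n_0$; players $1,\dots,m$ have action sets $\mathcal{A}_1=\dots=\mathcal{A}_m=[n_0]$; player $m+1$ (the ``kibitzer'') has action set $\mathcal{A}_{m+1}=\{(j,a_j): j\in[m],a_j\in\mathcal{A}_j\}$; $\bar{\mathcal{A}}=\prod_{j=1}^{m+1}\mathcal{A}_j$; there is a single state $\mathfrak{s}$. For $h\in[H]$ and action profile $\mathbf{a}=(a_1,\dots,a_{m+1})$ with $a_{m+1}=(j',a_{j'}')$, the reward to player $j\in[m+1]$ is $R_{j,h}(\mathfrak{s},\mathbf{a})=\bar R_{j,h}(\mathfrak{s},\mathbf{a})+\frac1H2^{-3\lceil\log(1/\epsilon)\rceil}\mathrm{enc}(\mathbf{a})$, where $\mathrm{enc}(\mathbf{a})=\sum_{k}2^{-k}b_k\in[0,1]$ for $(b_1,b_2,\dots)$ a binary encoding of $\mathbf{a}$, and $\bar R_{j,h}(\mathfrak{s},\mathbf{a})=0$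 if $j\notin\{j',m+1\}$; $\bar R_{j,h}(\mathfrak{s},\mathbf{a})=\frac1H\big((M_j)_{a_1,\dots,a_m}-(M_j)_{a_1,\dots,a_{j'}',\dots,a_m}\big)$ if $j=j'$; and $\bar R_{m+1,h}(\mathfrak{s},\mathbf{a})=\frac1H\big((M_{j'})_{a_1,\dots,a_{j'}',\dots,a_m}-(M_{j'})_{a_1,\dots,a_m}\big)$, where $(a_1,\dots,a_{j'}',\dots,a_m)$ denotes $(a_1,\dots,a_m)$ with the $j'$-th coordinate replaced by $a_{j'}'$. *)

theory Defs
  imports Complex_Main "HOL-Library.FuncSet"
begin

text \<open>Players of the base game are indexed 0..m-1, actions 0..n0-1; the kibitzer is
  player index m.  An action profile of the Markov game is a pair (x, k) where
  x :: nat \<Rightarrow> nat gives the actions of players 0..m-1 (an element of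
  PiE {0..<m} (\<lambda>_. {0..<n0})) and k = (j', b) is the kibitzer's action.\<close>

definition horizon :: "nat \<Rightarrow> nat" where
  "horizon n0 = (LEAST H. (\<exists>k. H = 2 ^ k) \<and> n0 \<le> H)"

definition kib_actions :: "nat \<Rightarrow> nat \<Rightarrow> (nat \<times> nat) set" where
  "kib_actions m n0 = {(j, b). j < m \<and> b < n0}"

definition base_profiles :: "nat \<Rightarrow> nat \<Rightarrow> (nat \<Rightarrow> nat) set" where
  "base_profiles m n0 = PiE {0..<m} (\<lambda>_. {0..<n0})"

definition enc_scale :: "real \<Rightarrow> real" where
  "enc_scale eps = 2 powr (- 3 * real_of_int \<lceil>log 2 (1 / eps)\<rceil>)"

definition Rbar :: "nat \<Rightarrow> nat \<Rightarrow> (nat \<Rightarrow> (nat \<Rightarrow> nat) \<Rightarrow> real) \<Rightarrow> nat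
    \<Rightarrow> (nat \<Rightarrow> nat) \<times> (nat \<times> nat) \<Rightarrow> real" where
  "Rbar n0 m M j a =
     (case a of (x, (j', b)) \<Rightarrow>
        if j = j' then (M j x - M j (x(j' := b))) / real (horizon n0)
        else if j = m then (M j' (x(j' := b)) - M j' x) / real (horizon n0)
        else 0)"

text \<open>Reward of player j at step h in state s (single state, type unit).
  enc is the (fixed) binary encoding of action profiles into [0,1].\<close>
definition R :: "nat \<Rightarrow> nat \<Rightarrow> real \<Rightarrow> (nat \<Rightarrow> (nat \<Rightarrow> nat) \<Rightarrow> real)
    \<Rightarrow> ((nat \<Rightarrow> nat) \<times> (nat \<times> nat) \<Rightarrow> real) \<Rightarrow> nat \<Rightarrow> nat \<Rightarrow> unit
    \<Rightarrow> (nat \<Rightarrow> nat) \<times> (nat \<times> nat) \<Rightarrow> real" where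
  "R n0 m eps M enc j h s a =
     Rbar n0 m M j a + (1 / real (horizon n0)) * enc_scale eps * enc a"

definition exp_reward :: "nat \<Rightarrow> nat \<Rightarrow> real \<Rightarrow> (nat \<Rightarrow> (nat \<Rightarrow> nat) \<Rightarrow> real)
    \<Rightarrow> ((nat \<Rightarrow> nat) \<times> (nat \<times> nat) \<Rightarrow> real) \<Rightarrow> nat \<Rightarrow> nat \<Rightarrow> unit
    \<Rightarrow> (nat \<Rightarrow> nat \<Rightarrow> real) \<Rightarrow> (nat \<times> nat \<Rightarrow> real) \<Rightarrow> nat \<Rightarrow> real" where
  "exp_reward n0 m eps M enc i h s q qk a' =
     (\<Sum>x\<in>PiE ({0..<m} - {i}) (\<lambda>_. {0..<n0}). \<Sum>k\<in>kib_actions m n0.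
        (\<Prod>j\<in>{0..<m} - {i}. q j (x j)) * qk k * R n0 m eps M enc i h s (x(i := a'), k))"

end

theory Submission
  imports Defs
begin

theorem lemmaC8:
  fixes n0 m :: nat and eps :: real
    and M :: "nat \<Rightarrow> (nat \<Rightarrow> nat) \<Rightarrow> real"
    and enc :: "(nat \<Rightarrow> nat) \<times> (nat \<times> nat) \<Rightarrow> real"
    and i h :: nat and s :: unit
    and q :: "nat \<Rightarrow> nat \<Rightarrow> real" and qk :: "nat \<times> nat \<Rightarrow> real"
  assumes "1 \<le> n0" and "1 \<le> m" and "eps > 0"
    and "\<And>x k. x \<in> base_profiles m n0 \<Longrightarrow> k \<in> kib_actions m n0 \<Longrightarrow> 0 \<le> enc (x, k) \<and> enc (x, k) \<le> 1"
    and "i < m" and "h \<in> {1..horizon n0}"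
    and "\<And>j b. j < m \<Longrightarrow> j \<noteq> i \<Longrightarrow> 0 \<le> q j b"
    and "\<And>j. j < m \<Longrightarrow> j \<noteq> i \<Longrightarrow> (\<Sum>b<n0. q j b) = 1"
    and "\<And>k. 0 \<le> qk k"
    and "(\<Sum>k\<in>kib_actions m n0. qk k) = 1"
  shows "Max ((\<lambda>a'. exp_reward n0 m eps M enc i h s q qk a') ` {0..<n0}) \<ge> 0"
proof -
  define X where "X = PiE ({0..<m} - {i}) (\<lambda>_. {0..<n0::nat})"
  define P where "P x = (\<Prod>j\<in>{0..<m} - {i}. q j (x j))" for x :: "nat \<Rightarrow> nat"
  define f where "f a = (\<Sum>x\<in>X. P x * M i (x(i := a)))" for a
  define HH where "HH = real (horizon n0)"
  define c where "c = (1 / HH) * enc_scale eps"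
  have HHpos: "HH > 0" using assms(6) by (auto simp: HH_def)
  have cnn: "c \<ge> 0" using HHpos by (simp add: c_def enc_scale_def)
  have finX: "finite X" by (simp add: X_def finite_PiE)
  have Pnn: "P x \<ge> 0" for x unfolding P_def using assms(7) by (intro prod_nonneg) auto
  have finK: "finite (kib_actions m n0)"
  proof -
    have "kib_actions m n0 \<subseteq> {0..<m} \<times> {0..<n0}" by (auto simp: kib_actions_def)
    thus ?thesis by (rule finite_subset) auto
  qed
  have ne: "{0..<n0} \<noteq> {}" using assms(1) by auto
  define fm where "fm = Max (f ` {0..<n0})"
  have "fm \<in> f ` {0..<n0}" unfolding fm_def using ne by (intro Max_in) auto
  then obtain a where a: "a \<in> {0..<n0}" "f a = fm" by auto
  have fle: "f b \<le> f a" if "b \<in> {0..<n0}" for b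
    using a(2) that unfolding fm_def by (auto intro: Max_ge)
  define g where "g k = (\<Sum>x\<in>X. P x * Rbar n0 m M i (x(i := a), k))" for k
  have gnn: "g k \<ge> 0" if k: "k \<in> kib_actions m n0" for k
  proof (cases "fst k = i")
    case True
    then obtain b where kb: "k = (i, b)" and b: "b < n0" using k
      by (cases k) (auto simp: kib_actions_def)
    have "g k = (\<Sum>x\<in>X. P x * ((M i (x(i := a)) - M i (x(i := b))) / HH))"
      unfolding g_def kb by (simp add: Rbar_def HH_def)
    also have "\<dots> = (f a - f b) / HH"
      unfolding f_def by (simp add: sum_divide_distrib[symmetric] sum_subtractf right_diff_distrib)
    also have "\<dots> \<ge> 0" using fle[of b] b HHpos by simp
    finally show ?thesis .
  next
    case False
    then obtain j b where kb: "k = (j, b)" "j \<noteq> i" by (cases k) auto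
    show ?thesis using assms(5) kb(2) unfolding g_def kb(1) by (simp add: Rbar_def)
  qed
  have er: "exp_reward n0 m eps M enc i h s q qk a =
     (\<Sum>x\<in>X. \<Sum>k\<in>kib_actions m n0. P x * qk k * Rbar n0 m M i (x(i := a), k))
   + (\<Sum>x\<in>X. \<Sum>k\<in>kib_actions m n0. P x * qk k * (c * enc (x(i := a), k)))"
    unfolding exp_reward_def R_def X_def[symmetric] P_def[symmetric] c_def HH_def
    by (simp add: sum.distrib[symmetric] distrib_left mult.assoc)
  have s1: "(\<Sum>x\<in>X. \<Sum>k\<in>kib_actions m n0. P x * qk k * Rbar n0 m M i (x(i := a), k))
      = (\<Sum>k\<in>kib_actions m n0. qk k * g k)"
    unfolding g_def by (subst sum.swap) (simp add: sum_distrib_left mult_ac)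
  have s1nn: "(\<Sum>k\<in>kib_actions m n0. qk k * g k) \<ge> 0"
    using gnn assms(9) by (auto intro: sum_nonneg)
  have s2nn: "(\<Sum>x\<in>X. \<Sum>k\<in>kib_actions m n0. P x * qk k * (c * enc (x(i := a), k))) \<ge> 0"
  proof (intro sum_nonneg)
    fix x k assume x: "x \<in> X" and k: "k \<in> kib_actions m n0"
    have "x(i := a) \<in> base_profiles m n0"
      using x a assms(5) unfolding X_def base_profiles_def by (auto simp: PiE_iff extensional_def)
    hence "enc (x(i := a), k) \<ge> 0" using assms(4) k by blast
    thus "P x * qk k * (c * enc (x(i := a), k)) \<ge> 0"
      using Pnn assms(9) cnn by simp
  qed
  have "exp_reward n0 m eps M enc i h s q qk a \<ge> 0" using er s1 s1nn s2nn by linarith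
  also have "exp_reward n0 m eps M enc i h s q qk a
      \<le> Max ((\<lambda>a'. exp_reward n0 m eps M enc i h s q qk a') ` {0..<n0})"
    using a(1) by (intro Max_ge) auto
  finally show ?thesis .
qed

end
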